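(* Let $H\le F_N$ be a nontrivial finitely generated subgroup. Then $\eta_H\in\mathcal S\mathrm{Curr}(F_N)$.
   Context: $\mathfrak C_N$ is the set of closed subsets of $\partial F_N$ with at least two points, with the Vietoris topology and the left translation action of $F_N$; $\mathcal S\mathrm{Curr}(F_N)$ is the set of positive $F_N$-invariant Borel measures on $\mathfrak C_N$ that are finite on compact subsets. The limit set $\Lambda(H)\subseteq\partial F_N$ is the set of limits of sequences of elements of $H$; $\mathrm{Comm}_{F_N}(H)=\{g\in F_N:[H:H\cap gHg^{-1}]<\infty,\ [gHg^{-1}:H\cap gHg^{-1}]<\infty\}$, which contains $H$ with finite index when $H$ is finitely generated and nontrivial. If $H=\mathrm{Comm}_{F_N}(H)$, $\eta_H:=\sum_{H_1\in[H]}\delta_{\Lambda(H_1)}$ with $[H]$ the conjugacy class of $H$; in general $\eta_H:=m\,\eta_{H_0}$ where $H_0=\mathrm{Comm}_{F_N}(H)$ and $m=[H_0:H]$. *)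

theory Defs
  imports "HOL-Analysis.Analysis" "HOL-Algebra.Algebra"
begin

type_synonym letter = "nat \<times> bool"   \<comment> \<open>(generator index, inverted?)\<close>

definition linv :: "letter \<Rightarrow> letter" where
  "linv a = (fst a, \<not> snd a)"

definition reduced :: "letter list \<Rightarrow> bool" where
  "reduced w \<longleftrightarrow> (\<forall>i. Suc i < length w \<longrightarrow> w ! Suc i \<noteq> linv (w ! i))"

definition red :: "letter list \<Rightarrow> letter list" where
  "red xs = foldr (\<lambda>a w. case w of [] \<Rightarrow> [a] | b # w' \<Rightarrow> (if b = linv a then w' else a # w)) xs []"

definition FN :: "nat \<Rightarrow> letter list monoid" where
  "FN N = \<lparr> carrier = {w. reduced w \<and> (\<forall>a\<in>set w. fst a < N)},
            mult = (\<lambda>x y. red (x @ y)), one = [] \<rparr>"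

definition Bd :: "nat \<Rightarrow> (nat \<Rightarrow> letter) set" where
  "Bd N = {\<xi>. (\<forall>i. fst (\<xi> i) < N) \<and> (\<forall>i. \<xi> (Suc i) \<noteq> linv (\<xi> i))}"

definition BdTop :: "nat \<Rightarrow> (nat \<Rightarrow> letter) topology" where
  "BdTop N = subtopology (product_topology (\<lambda>_. discrete_topology UNIV) UNIV) (Bd N)"

definition act :: "letter list \<Rightarrow> (nat \<Rightarrow> letter) \<Rightarrow> (nat \<Rightarrow> letter)" where
  "act g \<xi> = foldr (\<lambda>a \<zeta>. if \<zeta> 0 = linv a then (\<lambda>i. \<zeta> (Suc i)) else case_nat a \<zeta>) g \<xi>"

text \<open>Limit set: limits in F_N \<union> \<partial>F_N of sequences of elements of H
  (h_n \<rightarrow> \<xi> iff the common prefix of h_n and \<xi> becomes arbitrarily long).\<close>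
definition LimSet :: "nat \<Rightarrow> letter list set \<Rightarrow> (nat \<Rightarrow> letter) set" where
  "LimSet N H = {\<xi> \<in> Bd N. \<exists>hs. (\<forall>n. hs n \<in> H) \<and>
      (\<forall>k. eventually (\<lambda>n. k \<le> length (hs n) \<and> take k (hs n) = map \<xi> [0..<k]) sequentially)}"

definition CN :: "nat \<Rightarrow> (nat \<Rightarrow> letter) set set" where
  "CN N = {C. closedin (BdTop N) C \<and> (\<exists>x y. x \<in> C \<and> y \<in> C \<and> x \<noteq> y)}"

definition Vietoris :: "nat \<Rightarrow> (nat \<Rightarrow> letter) set topology" where
  "Vietoris N = subtopology
     (topology_generated_by
        ({{C. C \<subseteq> U} | U. openin (BdTop N) U} \<union> {{C. C \<inter> U \<noteq> {}} | U. openin (BdTop N) U}))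
     (CN N)"

definition BorelV :: "nat \<Rightarrow> (nat \<Rightarrow> letter) set set set" where
  "BorelV N = sigma_sets (CN N) {U. openin (Vietoris N) U}"

definition SCurr :: "nat \<Rightarrow> ((nat \<Rightarrow> letter) set set \<Rightarrow> ennreal) \<Rightarrow> bool" where
  "SCurr N \<mu> \<longleftrightarrow> measure_space (CN N) (BorelV N) \<mu>
     \<and> (\<forall>g \<in> carrier (FN N). \<forall>A \<in> BorelV N. \<mu> ((\<lambda>C. act g ` C) ` A) = \<mu> A)
     \<and> (\<forall>K. compactin (Vietoris N) K \<longrightarrow> \<mu> K < \<infinity>)"

definition conjg :: "('a, 'b) monoid_scheme \<Rightarrow> 'a \<Rightarrow> 'a set \<Rightarrow> 'a set" where
  "conjg G g H = (\<lambda>h. g \<otimes>\<^bsub>G\<^esub> h \<otimes>\<^bsub>G\<^esub> inv\<^bsub>G\<^esub> g) ` H"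

definition cosets_in :: "('a, 'b) monoid_scheme \<Rightarrow> 'a set \<Rightarrow> 'a set \<Rightarrow> 'a set set" where
  "cosets_in G K H = (\<lambda>h. K #>\<^bsub>G\<^esub> h) ` H"

definition Comm :: "('a, 'b) monoid_scheme \<Rightarrow> 'a set \<Rightarrow> 'a set" where
  "Comm G H = {g \<in> carrier G.
      finite (cosets_in G (H \<inter> conjg G g H) H) \<and>
      finite (cosets_in G (H \<inter> conjg G g H) (conjg G g H))}"

definition conjclass :: "('a, 'b) monoid_scheme \<Rightarrow> 'a set \<Rightarrow> 'a set set" where
  "conjclass G H = {conjg G g H | g. g \<in> carrier G}"

text \<open>\<eta>_H = m \<cdot> \<Sum>_{H_1 \<in> [H_0]} \<delta>_{\<Lambda>(H_1)}, H_0 = Comm(H), m = [H_0 : H].\<close>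
definition eta :: "nat \<Rightarrow> letter list set \<Rightarrow> (nat \<Rightarrow> letter) set set \<Rightarrow> ennreal" where
  "eta N H A = (let H0 = Comm (FN N) H in
     of_nat (card (cosets_in (FN N) H H0)) *
     emeasure (count_space (conjclass (FN N) H0)) {H1 \<in> conjclass (FN N) H0. LimSet N H1 \<in> A})"

end

theory Submission
  imports Defs
begin


definition stp :: "letter \<Rightarrow> letter list \<Rightarrow> letter list" where
  "stp = (\<lambda>a w. case w of [] \<Rightarrow> [a] | b # w' \<Rightarrow> (if b = linv a then w' else a # w))"

definition winv :: "letter list \<Rightarrow> letter list" where
  "winv w = rev (map linv w)"

definition stpI :: "letter \<Rightarrow> (nat \<Rightarrow> letter) \<Rightarrow> (nat \<Rightarrow> letter)" where
  "stpI = (\<lambda>a \<zeta>. if \<zeta> 0 = linv a then (\<lambda>i. \<zeta> (Suc i)) else case_nat a \<zeta>)"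

definition RI :: "(nat \<Rightarrow> letter) \<Rightarrow> bool" where
  "RI \<zeta> \<longleftrightarrow> (\<forall>i. \<zeta> (Suc i) \<noteq> linv (\<zeta> i))"

lemma linv_linv[simp]: "linv (linv a) = a" by (simp add: linv_def)
lemma linv_inj[simp]: "linv a = linv b \<longleftrightarrow> a = b" by (metis linv_linv)
lemma linv_neq[simp]: "linv a \<noteq> a" by (simp add: linv_def prod_eq_iff)
lemma fst_linv[simp]: "fst (linv a) = fst a" by (simp add: linv_def)

lemma stp_Nil[simp]: "stp a [] = [a]" by (simp add: stp_def)
lemma stp_Cons[simp]: "stp a (b # w) = (if b = linv a then w else a # b # w)" by (simp add: stp_def)

lemma red_foldr: "red xs = foldr stp xs []"
  by (simp add: red_def stp_def)

lemma red_Nil[simp]: "red [] = []" by (simp add: red_foldr)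
lemma red_Cons: "red (a # xs) = stp a (red xs)" by (simp add: red_foldr)
lemma red_append: "red (xs @ ys) = foldr stp xs (red ys)" by (simp add: red_foldr)

lemma act_Nil[simp]: "act [] \<xi> = \<xi>" by (simp add: act_def)
lemma act_Cons: "act (a # g) \<xi> = stpI a (act g \<xi>)" by (simp add: act_def stpI_def)
lemma act_append: "act (xs @ ys) \<xi> = act xs (act ys \<xi>)" by (simp add: act_def)

lemma reduced_Nil[simp]: "reduced []" by (simp add: reduced_def)
lemma reduced_Cons: "reduced (a # w) \<longleftrightarrow> reduced w \<and> (w \<noteq> [] \<longrightarrow> hd w \<noteq> linv a)"
  apply (cases w)
   apply (simp add: reduced_def)
  apply (auto simp add: reduced_def nth_Cons split: nat.splits)
  done

lemma reduced_stp: "reduced w \<Longrightarrow> reduced (stp a w)"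
  by (cases w) (auto simp: reduced_Cons)

lemma reduced_foldr: "reduced w \<Longrightarrow> reduced (foldr stp xs w)"
  by (induction xs) (auto intro: reduced_stp)

lemma reduced_red[simp]: "reduced (red xs)"
  by (simp add: red_foldr reduced_foldr)

lemma red_reduced: "reduced w \<Longrightarrow> red w = w"
proof (induction w)
  case (Cons a w)
  then have "reduced w" by (simp add: reduced_Cons)
  with Cons show ?case by (cases w) (auto simp: red_Cons reduced_Cons)
qed simp

lemma stp_stp: "reduced u \<Longrightarrow> stp a (stp (linv a) u) = u"
  by (cases u; cases "tl u") (auto simp: reduced_Cons)

lemma foldr_stp_stp:
  assumes w: "reduced w" shows "foldr stp (stp a u) w = stp a (foldr stp u w)"
proof (cases u)
  case (Cons b u')
  show ?thesis
  proof (cases "b = linv a")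
    case True
    have "foldr stp (stp a u) w = foldr stp u' w" using Cons True by simp
    also have "\<dots> = stp a (stp (linv a) (foldr stp u' w))"
      by (rule stp_stp[symmetric], rule reduced_foldr[OF w])
    also have "\<dots> = stp a (foldr stp u w)" using Cons True by simp
    finally show ?thesis .
  next
    case False
    then show ?thesis using Cons by simp
  qed
qed simp

lemma foldr_red: "reduced w \<Longrightarrow> foldr stp (red xs) w = foldr stp xs w"
  by (induction xs) (simp_all add: red_Cons foldr_stp_stp)

lemma red_red_left: "red (red xs @ ys) = red (xs @ ys)"
  by (simp add: red_append foldr_red)

lemma red_red_right: "red (xs @ red ys) = red (xs @ ys)"
  by (simp add: red_append red_reduced)

lemma red_red[simp]: "red (red xs) = red xs"
  by (simp add: red_reduced)

lemma winv_Nil[simp]: "winv [] = []" by (simp add: winv_def)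
lemma winv_Cons: "winv (a # w) = winv w @ [linv a]" by (simp add: winv_def)
lemma winv_append: "winv (xs @ ys) = winv ys @ winv xs" by (simp add: winv_def)
lemma winv_winv[simp]: "winv (winv w) = w" by (simp add: winv_def rev_map comp_def)
lemma length_winv[simp]: "length (winv w) = length w" by (simp add: winv_def)

lemma foldr_cancel: "reduced u \<Longrightarrow> foldr stp (w @ winv w) u = u"
proof (induction w arbitrary: u)
  case (Cons a w)
  have "foldr stp ((a # w) @ winv (a # w)) u = stp a (foldr stp (w @ winv w) (stp (linv a) u))"
    by (simp add: winv_Cons)
  also have "\<dots> = stp a (stp (linv a) u)"
    using Cons by (simp add: reduced_stp)
  also have "\<dots> = u" using stp_stp[of u "a"] Cons.prems
    by (metis linv_linv stp_stp)
  finally show ?case .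
qed simp

lemma foldr_cancel': "reduced u \<Longrightarrow> foldr stp (winv w @ w) u = u"
  using foldr_cancel[of u "winv w"] by simp

lemma red_cancel_mid: "red (xs @ w @ winv w @ ys) = red (xs @ ys)"
  by (simp add: red_append foldr_cancel[of "red ys" w, simplified])

lemma red_cancel_mid': "red (xs @ winv w @ w @ ys) = red (xs @ ys)"
  using red_cancel_mid[of xs "winv w" ys] by simp

lemma red_cancel: "red (w @ winv w) = []"
  using red_cancel_mid[of "[]" w "[]"] by simp
lemma red_cancel': "red (winv w @ w) = []"
  using red_cancel_mid'[of "[]" w "[]"] by simp

lemma length_stp: "length (stp a w) \<le> Suc (length w)"
  by (cases w) auto

lemma length_red: "length (red xs) \<le> length xs"
proof (induction xs)
  case (Cons a xs) then show ?case using length_stp[of a "red xs"] by (simp add: red_Cons)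
qed simp

lemma length_red_append: "length (red (xs @ ys)) \<le> length (red xs) + length (red ys)"
proof -
  have "red (xs @ ys) = red (red xs @ red ys)" by (simp add: red_red_left red_red_right)
  then show ?thesis using length_red[of "red xs @ red ys"] by simp
qed


lemma cancel_lemma:
  assumes "reduced x" "reduced y"
  shows "\<exists>j. j \<le> length x \<and> j \<le> length y \<and> drop (length x - j) x = winv (take j y)
          \<and> red (x @ y) = take (length x - j) x @ drop j y"
  using assms(1)
proof (induction x)
  case Nil
  show ?case using red_reduced[OF assms(2)] by (intro exI[of _ 0]) simp
next
  case (Cons a x)
  have rx: "reduced x" and hx: "x \<noteq> [] \<Longrightarrow> hd x \<noteq> linv a" using Cons.prems by (auto simp: reduced_Cons)
  obtain j where j: "j \<le> length x" "j \<le> length y" "drop (length x - j) x = winv (take j y)"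
     "red (x @ y) = take (length x - j) x @ drop j y" using Cons.IH[OF rx] by blast
  have r: "red ((a # x) @ y) = stp a (take (length x - j) x @ drop j y)"
    using j(4) by (simp add: red_Cons)
  have sj: "length (a # x) - j = Suc (length x - j)" using j(1) by simp
  show ?case
  proof (cases "j < length x")
    case True
    have ne: "take (length x - j) x \<noteq> []" using True by (cases x) auto
    then obtain c cs where c: "take (length x - j) x = c # cs" by (cases "take (length x - j) x") auto
    have xne: "x \<noteq> []" using True by auto
    have "c = take (length x - j) x ! 0" using c by simp
    also have "\<dots> = x ! 0" using True by simp
    also have "\<dots> = hd x" using xne by (simp add: hd_conv_nth)
    finally have "c = hd x" .
    then have "c \<noteq> linv a" using hx xne by auto
    then have "red ((a # x) @ y) = take (length (a # x) - j) (a # x) @ drop j y"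
      using r c sj by simp
    moreover have "drop (length (a # x) - j) (a # x) = winv (take j y)"
      using j(3) sj by simp
    ultimately show ?thesis using j by (intro exI[of _ j]) auto
  next
    case False
    then have jx: "j = length x" using j(1) by simp
    have xw: "x = winv (take j y)" using j(3) jx by simp
    have r2: "red ((a # x) @ y) = stp a (drop j y)" using r jx by simp
    show ?thesis
    proof (cases "drop j y")
      case Nil
      have "red ((a # x) @ y) = take (length (a # x) - j) (a # x) @ drop j y"
        using r2 Nil sj jx by simp
      moreover have "drop (length (a # x) - j) (a # x) = winv (take j y)"
        using xw sj jx by simp
      ultimately show ?thesis using j by (intro exI[of _ j]) auto
    next
      case (Cons b D')
      show ?thesis
      proof (cases "b = linv a")
        case True
        have "drop j y \<noteq> []" using Cons by simp
        then have jy: "j < length y" by simp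
        have yj: "y ! j = b" using Cons hd_drop_conv_nth[OF jy] by simp
        have ty: "take (Suc j) y = take j y @ [b]" using jy yj by (simp add: take_Suc_conv_app_nth)
        have "drop (Suc j) y = tl (drop j y)" by (simp add: drop_Suc tl_drop)
        then have dD: "drop (Suc j) y = D'" using Cons by simp
        have "red ((a # x) @ y) = drop (Suc j) y" using r2 Cons True dD by simp
        moreover have "winv (take (Suc j) y) = a # x" using ty xw True by (simp add: winv_append winv_def)
        ultimately show ?thesis using jy jx
          by (intro exI[of _ "Suc j"]) simp
      next
        case False
        have "red ((a # x) @ y) = take (length (a # x) - j) (a # x) @ drop j y"
          using r2 Cons False sj jx by simp
        moreover have "drop (length (a # x) - j) (a # x) = winv (take j y)"
          using xw sj jx by simp
        ultimately show ?thesis using j by (intro exI[of _ j]) auto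
      qed
    qed
  qed
qed

section \<open>Infinite words\<close>

lemma stpI_same: "\<zeta> 0 = linv a \<Longrightarrow> stpI a \<zeta> = (\<lambda>i. \<zeta> (Suc i))" by (simp add: stpI_def)
lemma stpI_diff: "\<zeta> 0 \<noteq> linv a \<Longrightarrow> stpI a \<zeta> = case_nat a \<zeta>" by (simp add: stpI_def)

lemma RI_case_nat: "RI (case_nat a \<zeta>) \<longleftrightarrow> RI \<zeta> \<and> \<zeta> 0 \<noteq> linv a"
proof
  assume h: "RI (case_nat a \<zeta>)"
  have "\<zeta> (Suc i) \<noteq> linv (\<zeta> i)" for i using h[unfolded RI_def, rule_format, of "Suc i"] by simp
  moreover have "\<zeta> 0 \<noteq> linv a" using h[unfolded RI_def, rule_format, of 0] by simp
  ultimately show "RI \<zeta> \<and> \<zeta> 0 \<noteq> linv a" by (simp add: RI_def)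
next
  assume h: "RI \<zeta> \<and> \<zeta> 0 \<noteq> linv a"
  show "RI (case_nat a \<zeta>)" unfolding RI_def
  proof
    fix i show "case_nat a \<zeta> (Suc i) \<noteq> linv (case_nat a \<zeta> i)"
      using h by (cases i) (auto simp: RI_def)
  qed
qed

lemma RI_shift: "RI \<zeta> \<Longrightarrow> RI (\<lambda>i. \<zeta> (Suc i))" by (simp add: RI_def)

lemma RI_stpI: "RI \<zeta> \<Longrightarrow> RI (stpI a \<zeta>)"
  by (cases "\<zeta> 0 = linv a") (auto simp: stpI_same stpI_diff RI_shift RI_case_nat)

lemma RI_act: "RI \<zeta> \<Longrightarrow> RI (act g \<zeta>)"
  by (induction g) (auto simp: act_Cons RI_stpI)

lemma stpI_stpI: assumes "RI \<zeta>" shows "stpI a (stpI (linv a) \<zeta>) = \<zeta>"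
proof (cases "\<zeta> 0 = a")
  case True
  have "\<zeta> (Suc 0) \<noteq> linv a" using assms True unfolding RI_def by auto
  then show ?thesis using True 
    by (simp add: stpI_same stpI_diff) (auto simp: fun_eq_iff split: nat.splits)
next
  case False
  then show ?thesis by (simp add: stpI_same stpI_diff)
qed

lemma act_stp: assumes "RI \<zeta>" shows "act (stp a u) \<zeta> = stpI a (act u \<zeta>)"
proof (cases u)
  case (Cons b u')
  show ?thesis
  proof (cases "b = linv a")
    case True
    then show ?thesis using Cons stpI_stpI[OF RI_act[OF assms, of u'], of a] by (simp add: act_Cons)
  qed (use Cons in \<open>simp add: act_Cons\<close>)
qed (simp add: act_Cons)

lemma act_red: "RI \<zeta> \<Longrightarrow> act (red xs) \<zeta> = act xs \<zeta>"
  by (induction xs) (simp_all add: red_Cons act_stp act_Cons)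

lemma act_cancel: "RI \<zeta> \<Longrightarrow> act (w @ winv w) \<zeta> = \<zeta>"
  using act_red[of \<zeta> "w @ winv w"] by (simp add: red_cancel)

lemma act_cancel': "RI \<zeta> \<Longrightarrow> act (winv w @ w) \<zeta> = \<zeta>"
  using act_cancel[of \<zeta> "winv w"] by simp

lemma Bd_iff: "\<xi> \<in> Bd N \<longleftrightarrow> RI \<xi> \<and> (\<forall>i. fst (\<xi> i) < N)"
  by (auto simp: Bd_def RI_def)

lemma stpI_letters: "(\<forall>i. fst (\<zeta> i) < N) \<Longrightarrow> fst a < N \<Longrightarrow> (\<forall>i. fst (stpI a \<zeta> i) < N)"
  by (auto simp: stpI_def split: nat.splits)

lemma act_Bd: "\<xi> \<in> Bd N \<Longrightarrow> \<forall>a\<in>set g. fst a < N \<Longrightarrow> act g \<xi> \<in> Bd N"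
  by (induction g) (auto simp: Bd_iff act_Cons RI_stpI stpI_letters)

definition cat :: "letter list \<Rightarrow> (nat \<Rightarrow> letter) \<Rightarrow> (nat \<Rightarrow> letter)" where
  "cat q \<alpha> = (\<lambda>i. if i < length q then q ! i else \<alpha> (i - length q))"

lemma cat_Nil[simp]: "cat [] \<alpha> = \<alpha>" by (simp add: cat_def)
lemma cat_Cons: "cat (a # q) \<alpha> = case_nat a (cat q \<alpha>)"
  by (auto simp: cat_def fun_eq_iff split: nat.splits)

lemma act_cat: "RI (cat q \<alpha>) \<Longrightarrow> act q \<alpha> = cat q \<alpha>"
proof (induction q)
  case (Cons a q)
  have "RI (cat q \<alpha>)" "cat q \<alpha> 0 \<noteq> linv a" using Cons.prems by (auto simp: cat_Cons RI_case_nat)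
  then show ?case using Cons.IH by (simp add: act_Cons stpI_diff cat_Cons)
qed simp

lemma RI_cat: "reduced q \<Longrightarrow> RI \<alpha> \<Longrightarrow> (q \<noteq> [] \<longrightarrow> \<alpha> 0 \<noteq> linv (last q)) \<Longrightarrow> RI (cat q \<alpha>)"
proof (induction q)
  case (Cons a q)
  have rq: "reduced q" using Cons.prems by (simp add: reduced_Cons)
  have "RI (cat q \<alpha>)" using Cons rq by (cases q) auto
  moreover have "cat q \<alpha> 0 \<noteq> linv a"
  proof (cases q)
    case Nil then show ?thesis using Cons.prems by simp
  next
    case (Cons b q') 
    then show ?thesis using Cons.prems(1) by (simp add: reduced_Cons cat_def)
  qed
  ultimately show ?case by (simp add: cat_Cons RI_case_nat)
qed simp

definition agree :: "letter list \<Rightarrow> (nat \<Rightarrow> letter) \<Rightarrow> nat \<Rightarrow> bool" where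
  "agree w \<xi> k \<longleftrightarrow> k \<le> length w \<and> (\<forall>i<k. w ! i = \<xi> i)"

lemma agree_mono: "agree w \<xi> k \<Longrightarrow> k' \<le> k \<Longrightarrow> agree w \<xi> k'"
  by (auto simp: agree_def)

lemma agree_take: "agree w \<xi> k \<longleftrightarrow> k \<le> length w \<and> take k w = map \<xi> [0..<k]"
  by (auto simp: agree_def list_eq_iff_nth_eq)

lemma agree_left:
  "agree w \<xi> (k + length g) \<Longrightarrow> agree (foldr stp g w) (act g \<xi>) k"
proof (induction g arbitrary: k)
  case (Cons a g)
  have ag: "agree (foldr stp g w) (act g \<xi>) (Suc k)" using Cons by simp
  then have ne: "foldr stp g w \<noteq> []" and h0: "foldr stp g w ! 0 = act g \<xi> 0"
    by (auto simp: agree_def)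
  obtain b u where u: "foldr stp g w = b # u" using ne by (cases "foldr stp g w") auto
  have b: "b = act g \<xi> 0" using u h0 by simp
  show ?case
  proof (cases "b = linv a")
    case True
    then show ?thesis using ag u b by (auto simp: act_Cons stpI_same agree_def)
  next
    case False
    then show ?thesis using ag u b 
      by (auto simp: act_Cons stpI_diff agree_def nth_Cons split: nat.splits)
  qed
qed simp

lemma agree_right:
  assumes "reduced w" "agree w \<xi> (k + length v)"
  shows "agree (red (w @ v)) \<xi> k"
proof -
  obtain j where j: "j \<le> length w" "j \<le> length (red v)"
     "red (w @ red v) = take (length w - j) w @ drop j (red v)"
    using cancel_lemma[OF assms(1) reduced_red[of v]] by blast
  have "j \<le> length v" using j(2) length_red[of v] by simp
  then have kk: "k \<le> length w - j" using assms(2) by (auto simp: agree_def)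
  have "red (w @ v) = take (length w - j) w @ drop j (red v)" using j(3) by (simp add: red_red_right)
  then show ?thesis using kk assms(2) by (auto simp: agree_def nth_append)
qed

lemma set_stp: "set (stp a w) \<subseteq> insert a (set w)"
  by (cases w) auto

lemma set_red: "set (red xs) \<subseteq> set xs"
proof (induction xs)
  case (Cons a xs) then show ?case using set_stp[of a "red xs"] by (auto simp: red_Cons)
qed simp

lemma reduced_winv: assumes "reduced w" shows "reduced (winv w)"
  unfolding reduced_def
proof (intro allI impI)
  fix i assume i: "Suc i < length (winv w)"
  define n where "n = length w"
  define j where "j = n - Suc (Suc i)"
  have sj: "Suc j = n - Suc i" and jn: "Suc j < n" using i by (auto simp: j_def n_def)
  have "w ! Suc j \<noteq> linv (w ! j)" using assms jn by (auto simp: reduced_def n_def)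
  moreover have "winv w ! Suc i = linv (w ! j)" using i by (simp add: winv_def rev_nth j_def n_def)
  moreover have "winv w ! i = linv (w ! Suc j)" using i sj by (simp add: winv_def rev_nth n_def)
  ultimately show "winv w ! Suc i \<noteq> linv (winv w ! i)" by auto
qed

lemma set_winv: "set (winv w) = linv ` set w" by (simp add: winv_def)

lemma carrier_FN: "w \<in> carrier (FN N) \<longleftrightarrow> reduced w \<and> (\<forall>a\<in>set w. fst a < N)"
  by (simp add: FN_def)
lemma mult_FN: "x \<otimes>\<^bsub>FN N\<^esub> y = red (x @ y)" by (simp add: FN_def)
lemma one_FN: "\<one>\<^bsub>FN N\<^esub> = []" by (simp add: FN_def)

lemma red_carrier: "\<forall>a\<in>set xs. fst a < N \<Longrightarrow> red xs \<in> carrier (FN N)"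
  using set_red[of xs] by (auto simp: carrier_FN)

lemma winv_carrier: "w \<in> carrier (FN N) \<Longrightarrow> winv w \<in> carrier (FN N)"
  by (auto simp: carrier_FN reduced_winv set_winv)

lemma group_FN: "group (FN N)"
proof (rule groupI)
  fix x y assume "x \<in> carrier (FN N)" "y \<in> carrier (FN N)"
  then show "x \<otimes>\<^bsub>FN N\<^esub> y \<in> carrier (FN N)" unfolding mult_FN by (intro red_carrier) (auto simp: carrier_FN)
next
  show "\<one>\<^bsub>FN N\<^esub> \<in> carrier (FN N)" by (simp add: one_FN carrier_FN)
next
  fix x y z assume "x \<in> carrier (FN N)" "y \<in> carrier (FN N)" "z \<in> carrier (FN N)"
  show "x \<otimes>\<^bsub>FN N\<^esub> y \<otimes>\<^bsub>FN N\<^esub> z = x \<otimes>\<^bsub>FN N\<^esub> (y \<otimes>\<^bsub>FN N\<^esub> z)"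
    by (simp add: mult_FN red_red_left red_red_right)
next
  fix x assume "x \<in> carrier (FN N)"
  then show "\<one>\<^bsub>FN N\<^esub> \<otimes>\<^bsub>FN N\<^esub> x = x" by (simp add: one_FN mult_FN carrier_FN red_reduced)
next
  fix x assume x: "x \<in> carrier (FN N)"
  show "\<exists>y\<in>carrier (FN N). y \<otimes>\<^bsub>FN N\<^esub> x = \<one>\<^bsub>FN N\<^esub>"
    using winv_carrier[OF x] by (intro bexI[of _ "winv x"]) (simp_all add: mult_FN one_FN red_cancel')
qed

lemma inv_FN: "w \<in> carrier (FN N) \<Longrightarrow> inv\<^bsub>FN N\<^esub> w = winv w"
  by (rule group.inv_equality[OF group_FN]) (simp_all add: mult_FN one_FN red_cancel' winv_carrier)

lemma red_mid: "red (A @ red B @ C) = red (A @ B @ C)"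
  by (simp only: red_append[of A] red_red_left)

lemma conjg_FN_elem: "g \<in> carrier (FN N) \<Longrightarrow> h \<in> carrier (FN N) \<Longrightarrow>
  g \<otimes>\<^bsub>FN N\<^esub> h \<otimes>\<^bsub>FN N\<^esub> inv\<^bsub>FN N\<^esub> g = red (g @ h @ winv g)"
  by (simp add: inv_FN mult_FN red_red_left)

lemma conjg_FN: "g \<in> carrier (FN N) \<Longrightarrow> Y \<subseteq> carrier (FN N) \<Longrightarrow>
  conjg (FN N) g Y = (\<lambda>h. red (g @ h @ winv g)) ` Y"
  unfolding conjg_def by (auto simp: conjg_FN_elem subset_iff intro!: image_cong)

section \<open>Limit sets\<close>

lemma LimSet_iff: "\<xi> \<in> LimSet N Y \<longleftrightarrow> \<xi> \<in> Bd N \<and> (\<exists>hs. (\<forall>n. hs n \<in> Y) \<and>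
   (\<forall>k. eventually (\<lambda>n. agree (hs n) \<xi> k) sequentially))"
  by (simp add: LimSet_def agree_take)

lemma conv_conj:
  assumes "\<forall>n. reduced (hs n)" "\<forall>k. eventually (\<lambda>n. agree (hs n) \<xi> k) sequentially"
  shows "eventually (\<lambda>n. agree (red (g @ hs n @ winv g)) (act g \<xi>) k) sequentially"
proof -
  have "eventually (\<lambda>n. agree (hs n) \<xi> (k + length g + length (winv g))) sequentially"
    using assms(2) by blast
  then show ?thesis
  proof (rule eventually_mono)
    fix n assume "agree (hs n) \<xi> (k + length g + length (winv g))"
    then have "agree (red (hs n @ winv g)) \<xi> (k + length g)" using agree_right assms(1) by blast
    then have "agree (foldr stp g (red (hs n @ winv g))) (act g \<xi>) k" by (rule agree_left)
    then show "agree (red (g @ hs n @ winv g)) (act g \<xi>) k" by (simp add: red_append)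
  qed
qed

lemma act_carrier_Bd: "g \<in> carrier (FN N) \<Longrightarrow> \<xi> \<in> Bd N \<Longrightarrow> act g \<xi> \<in> Bd N"
  by (rule act_Bd) (auto simp: carrier_FN)

lemma LimSet_conjg:
  assumes g: "g \<in> carrier (FN N)" and Y: "Y \<subseteq> carrier (FN N)"
  shows "LimSet N (conjg (FN N) g Y) = act g ` LimSet N Y"
proof
  show "act g ` LimSet N Y \<subseteq> LimSet N (conjg (FN N) g Y)"
  proof
    fix \<zeta> assume "\<zeta> \<in> act g ` LimSet N Y"
    then obtain \<xi> where z: "\<zeta> = act g \<xi>" and xi: "\<xi> \<in> LimSet N Y" by blast
    then obtain hs where hs: "\<forall>n. hs n \<in> Y" "\<forall>k. eventually (\<lambda>n. agree (hs n) \<xi> k) sequentially"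
      and bd: "\<xi> \<in> Bd N" by (auto simp: LimSet_iff)
    have red: "\<forall>n. reduced (hs n)" using hs(1) Y by (auto simp: carrier_FN)
    have ev: "\<forall>k. eventually (\<lambda>n. agree (red (g @ hs n @ winv g)) \<zeta> k) sequentially"
      using conv_conj[OF red hs(2)] z by blast
    have mem: "\<forall>n. red (g @ hs n @ winv g) \<in> (\<lambda>h. red (g @ h @ winv g)) ` Y"
      using hs(1) by blast
    show "\<zeta> \<in> LimSet N (conjg (FN N) g Y)"
      unfolding LimSet_iff conjg_FN[OF g Y]
    proof (rule conjI)
      show "\<zeta> \<in> Bd N" using z act_carrier_Bd[OF g bd] by simp
      show "\<exists>hs. (\<forall>n. hs n \<in> (\<lambda>h. red (g @ h @ winv g)) ` Y) \<and>
           (\<forall>k. \<forall>\<^sub>F n in sequentially. agree (hs n) \<zeta> k)"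
        by (rule exI[of _ "\<lambda>n. red (g @ hs n @ winv g)"]) (use ev mem in blast)
    qed
  qed
next
  show "LimSet N (conjg (FN N) g Y) \<subseteq> act g ` LimSet N Y"
  proof
    fix \<zeta> assume "\<zeta> \<in> LimSet N (conjg (FN N) g Y)"
    then obtain ks where ks: "\<forall>n. ks n \<in> (\<lambda>h. red (g @ h @ winv g)) ` Y"
       "\<forall>k. eventually (\<lambda>n. agree (ks n) \<zeta> k) sequentially" and bd: "\<zeta> \<in> Bd N"
      by (auto simp: LimSet_iff conjg_FN[OF g Y])
    obtain hs where hs: "\<forall>n. hs n \<in> Y \<and> ks n = red (g @ hs n @ winv g)"
    proof -
      have "\<forall>n. \<exists>h. h \<in> Y \<and> ks n = red (g @ h @ winv g)" using ks(1) by blast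
      then show ?thesis using that by metis
    qed
    have hsr: "reduced (hs n)" for n using hs Y by (auto simp: carrier_FN)
    have bk: "red (winv g @ ks n @ winv (winv g)) = hs n" for n
    proof -
      have "red (winv g @ ks n @ winv (winv g)) = red (winv g @ (g @ hs n @ winv g) @ g)"
        using hs red_mid[of "winv g" "g @ hs n @ winv g" g] by simp
      also have "\<dots> = red (hs n)"
        using red_cancel_mid'[of "[]" g "hs n @ winv g @ g"] red_cancel_mid'[of "hs n" g "[]"] by simp
      finally show ?thesis using red_reduced[OF hsr] by simp
    qed
    have ksr: "\<forall>n. reduced (ks n)" using hs by simp
    have wg: "winv g \<in> carrier (FN N)" using winv_carrier[OF g] .
    have ev: "\<forall>k. eventually (\<lambda>n. agree (hs n) (act (winv g) \<zeta>) k) sequentially"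
      using conv_conj[OF ksr ks(2), of "winv g"] bk by simp
    have "act (winv g) \<zeta> \<in> LimSet N Y"
      unfolding LimSet_iff using act_carrier_Bd[OF wg bd] ev hs by blast
    moreover have "act g (act (winv g) \<zeta>) = \<zeta>"
      using act_cancel[of \<zeta> g] bd by (simp add: act_append Bd_iff)
    ultimately show "\<zeta> \<in> act g ` LimSet N Y" by (metis imageI)
  qed
qed

lemma reduced_prefix: "RI \<zeta> \<Longrightarrow> reduced (map \<zeta> [0..<d])"
  unfolding reduced_def RI_def by simp

lemma map_cat: "map (cat q \<alpha>) [0..<length q] = q"
  by (rule nth_equalityI) (auto simp: cat_def)

lemma branch_point:
  assumes g: "reduced g" and xi: "RI \<xi>" and eta: "RI \<eta>"
    and d: "\<forall>i<d. act g \<xi> i = act g \<eta> i" "act g \<xi> d \<noteq> act g \<eta> d"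
  shows "\<exists>q. ((\<exists>i. q = map \<xi> [0..<i]) \<or> (\<exists>i. q = map \<eta> [0..<i])) \<and>
             red (g @ q) = map (act g \<xi>) [0..<d]"
proof -
  define P where "P = map (act g \<xi>) [0..<d]"
  define \<alpha> where "\<alpha> = (\<lambda>k. act g \<xi> (d + k))"
  define \<beta> where "\<beta> = (\<lambda>k. act g \<eta> (d + k))"
  have RIx: "RI (act g \<xi>)" and RIy: "RI (act g \<eta>)" using RI_act xi eta by auto
  have cx: "act g \<xi> = cat P \<alpha>"
    by (auto simp: fun_eq_iff cat_def P_def \<alpha>_def)
  have cy: "act g \<eta> = cat P \<beta>"
    using d(1) by (auto simp: fun_eq_iff cat_def P_def \<beta>_def)
  have RIa: "RI \<alpha>" and RIb: "RI \<beta>" using RIx RIy by (auto simp: RI_def \<alpha>_def \<beta>_def)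
  have ab: "\<alpha> 0 \<noteq> \<beta> 0" using d(2) by (simp add: \<alpha>_def \<beta>_def)
  have rP: "reduced P" unfolding P_def by (rule reduced_prefix[OF RIx])
  define q where "q = red (winv g @ P)"
  have xq: "\<xi> = act q \<alpha>"
  proof -
    have "\<xi> = act (winv g) (act g \<xi>)" using act_cancel'[OF xi, of g] by (simp add: act_append)
    also have "\<dots> = act (winv g) (act P \<alpha>)" using cx act_cat[of P \<alpha>] RIx by simp
    also have "\<dots> = act q \<alpha>" unfolding q_def using act_red[OF RIa, of "winv g @ P"] by (simp add: act_append)
    finally show ?thesis .
  qed
  have yq: "\<eta> = act q \<beta>"
  proof -
    have "\<eta> = act (winv g) (act g \<eta>)" using act_cancel'[OF eta, of g] by (simp add: act_append)
    also have "\<dots> = act (winv g) (act P \<beta>)" using cy act_cat[of P \<beta>] RIy by simp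
    also have "\<dots> = act q \<beta>" unfolding q_def using act_red[OF RIb, of "winv g @ P"] by (simp add: act_append)
    finally show ?thesis .
  qed
  have rq: "reduced q" by (simp add: q_def)
  have gq: "red (g @ q) = P"
  proof -
    have "red (g @ q) = red (g @ winv g @ P)" by (simp add: q_def red_red_right)
    also have "\<dots> = red P" using red_cancel_mid[of "[]" g P] by simp
    finally show ?thesis using red_reduced[OF rP] by simp
  qed
  have pre: "(\<exists>i. q = map \<xi> [0..<i]) \<or> (\<exists>i. q = map \<eta> [0..<i])"
  proof (cases "q = [] \<or> \<alpha> 0 \<noteq> linv (last q)")
    case True
    then have "RI (cat q \<alpha>)" using RI_cat[OF rq RIa] by auto
    then have "\<xi> = cat q \<alpha>" using xq act_cat by simp
    then have "q = map \<xi> [0..<length q]" using map_cat by simp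
    then show ?thesis by blast
  next
    case False
    then have "q = [] \<or> \<beta> 0 \<noteq> linv (last q)" using ab by auto
    then have "RI (cat q \<beta>)" using RI_cat[OF rq RIb] by auto
    then have "\<eta> = cat q \<beta>" using yq act_cat by simp
    then have "q = map \<eta> [0..<length q]" using map_cat by simp
    then show ?thesis by blast
  qed
  show ?thesis using pre gq unfolding P_def by blast
qed

section \<open>Quasiconvexity\<close>

lemma qc_generate:
  assumes S: "S \<subseteq> carrier (FN N)" and L: "\<forall>s\<in>S. length s \<le> L"
    and h: "h \<in> generate (FN N) S"
  shows "\<exists>v\<in>generate (FN N) S. length (red (winv (take i h) @ v)) \<le> L"
  using h
proof (induction h arbitrary: i rule: generate.induct)
  case one
  have "[] \<in> generate (FN N) S" using generate.one[of "FN N" S] by (simp add: one_FN)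
  then show ?case by (intro bexI[of _ "[]"]) (simp_all add: one_FN)
next
  case (incl h)
  have e: "[] \<in> generate (FN N) S" using generate.one[of "FN N" S] by (simp add: one_FN)
  have "length (red (winv (take i h) @ [])) \<le> length h"
    using length_red[of "winv (take i h) @ []"] by simp
  then show ?case using e L incl by (intro bexI[of _ "[]"]) force+
next
  case (inv h)
  have e: "[] \<in> generate (FN N) S" using generate.one[of "FN N" S] by (simp add: one_FN)
  have hc: "h \<in> carrier (FN N)" using inv S by auto
  have "length (red (winv (take i (winv h)) @ [])) \<le> length h"
    using length_red[of "winv (take i (winv h)) @ []"] by simp
  then show ?case using e L inv by (intro bexI[of _ "[]"]) (force simp: inv_FN[OF hc])+
next
  case (eng h1 h2)
  have gc: "generate (FN N) S \<subseteq> carrier (FN N)"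
    using group.generate_incl[OF group_FN S] .
  have r1: "reduced h1" and r2: "reduced h2" using eng.hyps gc by (auto simp: carrier_FN)
  obtain j where j: "j \<le> length h1" "j \<le> length h2" "drop (length h1 - j) h1 = winv (take j h2)"
     "red (h1 @ h2) = take (length h1 - j) h1 @ drop j h2"
    using cancel_lemma[OF r1 r2] by blast
  define A where "A = take (length h1 - j) h1"
  have lA: "length A = length h1 - j" using j(1) by (simp add: A_def)
  have "h1 = A @ drop (length h1 - j) h1" by (simp add: A_def)
  then have h1A: "h1 = A @ winv (take j h2)" using j(3) by simp
  have prod: "h1 \<otimes>\<^bsub>FN N\<^esub> h2 = A @ drop j h2" using j(4) by (simp add: mult_FN A_def)
  show ?case
  proof (cases "i \<le> length A")
    case True
    have "take i (h1 \<otimes>\<^bsub>FN N\<^esub> h2) = take i h1" using True prod lA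
      by (simp add: A_def)
    then show ?thesis using eng.IH(1)[of i] by simp
  next
    case False
    define B where "B = take (i - length A) (drop j h2)"
    have ti: "take i (h1 \<otimes>\<^bsub>FN N\<^esub> h2) = A @ B" using False prod by (simp add: B_def)
    have t2: "take (j + (i - length A)) h2 = take j h2 @ B" by (simp add: B_def take_add)
    obtain v where v: "v \<in> generate (FN N) S"
      "length (red (winv (take (j + (i - length A)) h2) @ v)) \<le> L"
      using eng.IH(2)[of "j + (i - length A)"] by blast
    have v': "h1 \<otimes>\<^bsub>FN N\<^esub> v \<in> generate (FN N) S" using generate.eng[OF eng.hyps(1) v(1)] .
    have "red (winv (A @ B) @ (h1 \<otimes>\<^bsub>FN N\<^esub> v)) = red (winv B @ winv A @ h1 @ v)"
      using red_red_right[of "winv B @ winv A" "h1 @ v"] by (simp add: mult_FN winv_append)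
    also have "\<dots> = red (winv B @ winv A @ A @ winv (take j h2) @ v)"
      by (subst h1A) simp
    also have "\<dots> = red (winv B @ winv (take j h2) @ v)"
      by (rule red_cancel_mid')
    also have "\<dots> = red (winv (take (j + (i - length A)) h2) @ v)"
      by (simp add: t2 winv_append)
    finally show ?thesis using ti v v' by (intro bexI[of _ "h1 \<otimes>\<^bsub>FN N\<^esub> v"]) simp_all
  qed
qed

lemma qc_coset:
  assumes qc: "\<And>i. \<exists>v\<in>Hs. length (red (winv (take i h) @ v)) \<le> L"
    and hH: "h \<in> Hs" and rh: "reduced h" and rt: "reduced t" and tM: "length t \<le> M"
  shows "\<exists>v\<in>Hs. length (red (winv (take i (red (h @ t))) @ v)) \<le> L + 2 * M"
proof -
  obtain j where j: "j \<le> length h" "j \<le> length t" "drop (length h - j) h = winv (take j t)"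
     "red (h @ t) = take (length h - j) h @ drop j t"
    using cancel_lemma[OF rh rt] by blast
  define A where "A = take (length h - j) h"
  have lA: "length A = length h - j" using j(1) by (simp add: A_def)
  have "h = A @ drop (length h - j) h" by (simp add: A_def)
  then have hA: "h = A @ winv (take j t)" using j(3) by simp
  show ?thesis
  proof (cases "i \<le> length A")
    case True
    have "take i (red (h @ t)) = take i h" using True j(4) lA by (simp add: A_def)
    then show ?thesis using qc[of i] by force
  next
    case False
    define B where "B = take (i - length A) (drop j t)"
    have ht: "red (h @ t) = A @ drop j t" using j(4) by (simp add: A_def)
    have ti: "take i (red (h @ t)) = A @ B" using False ht by (simp add: B_def)
    have "winv (A @ B) @ h = winv B @ winv A @ A @ winv (take j t)"
      using hA by (simp add: winv_append)
    then have "red (winv (A @ B) @ h) = red (winv B @ winv A @ A @ winv (take j t))" by simp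
    also have "\<dots> = red (winv B @ winv (take j t))"
      using red_cancel_mid'[of "winv B" A "winv (take j t)"] by simp
    finally have e: "red (winv (A @ B) @ h) = red (winv B @ winv (take j t))" .
    have "length (red (winv B @ winv (take j t))) \<le> length B + j"
      using length_red[of "winv B @ winv (take j t)"] j(2) by simp
    also have "\<dots> \<le> M + M" using tM j(2) by (simp add: B_def)
    finally show ?thesis using ti e hH by (intro bexI[of _ h]) simp_all
  qed
qed

section \<open>Conjugation and the commensurator\<close>

context group begin

lemma inv_cancel_left': "inv a \<otimes> (a \<otimes> z) = z" if "a \<in> carrier G" "z \<in> carrier G"
  using that by (simp add: m_assoc[symmetric])

lemma conjg_subset: "conjg G a Y \<subseteq> carrier G" if "a \<in> carrier G" "Y \<subseteq> carrier G"
  using that by (auto simp: conjg_def)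

lemma conjg_mult: "conjg G (a \<otimes> b) Y = conjg G a (conjg G b Y)"
  if "a \<in> carrier G" "b \<in> carrier G" "Y \<subseteq> carrier G"
proof -
  have "a \<otimes> b \<otimes> y \<otimes> inv (a \<otimes> b) = a \<otimes> (b \<otimes> y \<otimes> inv b) \<otimes> inv a" if "y \<in> carrier G" for y
    using that \<open>a \<in> carrier G\<close> \<open>b \<in> carrier G\<close> by (simp add: inv_mult_group m_assoc)
  then show ?thesis using that unfolding conjg_def by (auto simp: image_image subset_iff intro!: image_cong)
qed

lemma conjg_one: "conjg G \<one> Y = Y" if "Y \<subseteq> carrier G"
  using that unfolding conjg_def by (auto simp: subset_iff image_iff)

lemma conjg_inv_cancel: "conjg G (inv a) (conjg G a Y) = Y" if "a \<in> carrier G" "Y \<subseteq> carrier G"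
  using that by (simp add: conjg_mult[symmetric] conjg_one)

lemma conjg_subgroup_sub: "conjg G h H \<subseteq> H" if "subgroup H G" "h \<in> H"
  using that unfolding conjg_def by (auto intro: subgroup.m_closed subgroup.m_inv_closed)

lemma conjg_subgroup: "conjg G h H = H" if "subgroup H G" "h \<in> H"
proof
  show "conjg G h H \<subseteq> H" using conjg_subgroup_sub that .
  have hc: "h \<in> carrier G" "inv h \<in> H"
    using subgroup.mem_carrier[OF that] subgroup.m_inv_closed[OF that] by auto
  have Hc: "H \<subseteq> carrier G" using that subgroup.subset by blast
  have "conjg G (inv h) H \<subseteq> H" using conjg_subgroup_sub[OF that(1) hc(2)] .
  then have "conjg G h (conjg G (inv h) H) \<subseteq> conjg G h H" unfolding conjg_def by auto
  moreover have "conjg G h (conjg G (inv h) H) = H"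
    using conjg_inv_cancel[of "inv h" H] hc Hc by simp
  ultimately show "H \<subseteq> conjg G h H" by simp
qed

lemma conjg_Int: "conjg G a (Y \<inter> Z) = conjg G a Y \<inter> conjg G a Z"
  if "a \<in> carrier G" "Y \<subseteq> carrier G" "Z \<subseteq> carrier G"
proof -
  have "inj_on (\<lambda>x. a \<otimes> x \<otimes> inv a) (carrier G)"
    using that(1) by (auto simp: inj_on_def)
  then show ?thesis unfolding conjg_def using that by (auto simp: inj_on_def subset_iff)
qed

lemma conjg_rcoset:
  assumes a: "a \<in> carrier G" and K: "K \<subseteq> carrier G" and x: "x \<in> carrier G"
  shows "conjg G a (K #> x) = conjg G a K #> (a \<otimes> x \<otimes> inv a)"
proof -
  have that': "a \<otimes> (k \<otimes> x) \<otimes> inv a = (a \<otimes> k \<otimes> inv a) \<otimes> (a \<otimes> x \<otimes> inv a)" if "k \<in> carrier G" for k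
    using that a x by (simp add: m_assoc inv_cancel_left')
  have rc: "\<And>Z y. Z #> y = (\<lambda>k. k \<otimes> y) ` Z" by (auto simp: r_coset_def)
  have "conjg G a (K #> x) = (\<lambda>k. a \<otimes> (k \<otimes> x) \<otimes> inv a) ` K"
    unfolding conjg_def rc by (simp add: image_image)
  also have "\<dots> = (\<lambda>k. (a \<otimes> k \<otimes> inv a) \<otimes> (a \<otimes> x \<otimes> inv a)) ` K"
    using K by (intro image_cong) (auto simp: that' subset_iff)
  also have "\<dots> = conjg G a K #> (a \<otimes> x \<otimes> inv a)"
    unfolding conjg_def rc by (simp add: image_image)
  finally show ?thesis .
qed

lemma cosets_in_conjg: "cosets_in G (conjg G a K) (conjg G a Y) = conjg G a ` cosets_in G K Y"
  if "a \<in> carrier G" "K \<subseteq> carrier G" "Y \<subseteq> carrier G"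
proof -
  have "cosets_in G (conjg G a K) (conjg G a Y) = (\<lambda>y. conjg G a K #> (a \<otimes> y \<otimes> inv a)) ` Y"
    unfolding cosets_in_def conjg_def by (simp add: image_image)
  also have "\<dots> = (\<lambda>y. conjg G a (K #> y)) ` Y"
    using that by (auto simp: conjg_rcoset subset_iff intro!: image_cong)
  also have "\<dots> = conjg G a ` cosets_in G K Y" unfolding cosets_in_def by (simp add: image_image)
  finally show ?thesis .
qed

end

context group begin

lemma Comm_conj_closed:
  assumes H: "subgroup H G" and h: "h \<in> H" and g: "g \<in> Comm G H"
  shows "h \<otimes> g \<otimes> inv h \<in> Comm G H"
proof -
  have hc: "h \<in> carrier G" "inv h \<in> carrier G" using subgroup.mem_carrier[OF H h] by auto
  have Hc: "H \<subseteq> carrier G" using subgroup.subset[OF H] .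
  have gc: "g \<in> carrier G" and f1: "finite (cosets_in G (H \<inter> conjg G g H) H)"
    and f2: "finite (cosets_in G (H \<inter> conjg G g H) (conjg G g H))" using g by (auto simp: Comm_def)
  have gH: "conjg G g H \<subseteq> carrier G" using conjg_subset gc Hc by blast
  have hH: "conjg G h H = H" using conjg_subgroup[OF H h] .
  have hiH: "conjg G (inv h) H = H" using conjg_subgroup[OF H subgroup.m_inv_closed[OF H h]] .
  have e: "conjg G (h \<otimes> g \<otimes> inv h) H = conjg G h (conjg G g H)"
    using conjg_mult[of "h \<otimes> g" "inv h" H] conjg_mult[of h g "conjg G (inv h) H"] hc gc Hc hiH
    by simp
  have i: "H \<inter> conjg G (h \<otimes> g \<otimes> inv h) H = conjg G h (H \<inter> conjg G g H)"
    using e conjg_Int[of h H "conjg G g H"] hc Hc gH hH by simp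
  have IH: "H \<inter> conjg G g H \<subseteq> carrier G" using Hc by auto
  have "finite (cosets_in G (H \<inter> conjg G (h \<otimes> g \<otimes> inv h) H) H)"
    using cosets_in_conjg[of h "H \<inter> conjg G g H" H] i hH hc Hc IH f1 by simp
  moreover have "finite (cosets_in G (H \<inter> conjg G (h \<otimes> g \<otimes> inv h) H) (conjg G (h \<otimes> g \<otimes> inv h) H))"
    using cosets_in_conjg[of h "H \<inter> conjg G g H" "conjg G g H"] i e hc gH IH f2 by simp
  ultimately show ?thesis using hc gc by (simp add: Comm_def)
qed

lemma Comm_subset: "Comm G H \<subseteq> carrier G" by (auto simp: Comm_def)

lemma conjg_Comm: assumes H: "subgroup H G" and h: "h \<in> H"
  shows "conjg G h (Comm G H) = Comm G H"
proof -
  have sub: "conjg G x (Comm G H) \<subseteq> Comm G H" if "x \<in> H" for x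
    unfolding conjg_def using Comm_conj_closed[OF H that] by auto
  have hc: "h \<in> carrier G" "inv h \<in> H"
    using subgroup.mem_carrier[OF H h] subgroup.m_inv_closed[OF H h] by auto
  have hcc: "h \<in> carrier G" using subgroup.mem_carrier[OF H h] .
  have "conjg G (inv (inv h)) (conjg G (inv h) (Comm G H)) = Comm G H"
    by (rule conjg_inv_cancel) (use hcc Comm_subset in auto)
  then have "Comm G H = conjg G h (conjg G (inv h) (Comm G H))"
    using hcc by simp
  also have "\<dots> \<subseteq> conjg G h (Comm G H)" using sub[OF hc(2)] unfolding conjg_def by auto
  finally show ?thesis using sub[OF h] by blast
qed

end

abbreviation PT :: "(nat \<Rightarrow> letter) topology" where
  "PT \<equiv> product_topology (\<lambda>_. discrete_topology UNIV) UNIV"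

lemma topspace_PT: "topspace PT = UNIV"
  unfolding topspace_product_topology topspace_discrete_topology by (simp add: PiE_UNIV_domain)

lemma open_coord: "openin PT {\<xi>. \<xi> i = c}"
proof -
  have "openin PT {\<xi> \<in> topspace PT. \<xi> i \<in> {c}}"
    by (rule openin_continuous_map_preimage[OF continuous_map_product_projection]) auto
  then show ?thesis by (simp add: topspace_PT)
qed

lemma open_prefix: "openin PT {\<xi>. \<forall>i<n. \<xi> i = w ! i}"
proof (induction n)
  case 0
  then show ?case using openin_topspace[of PT] by (simp add: topspace_PT)
next
  case (Suc n)
  have "{\<xi>. \<forall>i<Suc n. \<xi> i = w ! i} = {\<xi>. \<forall>i<n. \<xi> i = w ! i} \<inter> {\<xi>. \<xi> n = w ! n}"
    by (auto simp: less_Suc_eq)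
  then show ?case using openin_Int[OF Suc open_coord] by simp
qed

definition Zc :: "nat \<Rightarrow> letter list \<Rightarrow> (nat \<Rightarrow> letter) set" where
  "Zc N w = {\<xi> \<in> Bd N. map \<xi> [0..<length w] = w}"

lemma open_Zc: "openin (BdTop N) (Zc N w)"
proof -
  have e: "map \<xi> [0..<length w] = w \<longleftrightarrow> (\<forall>i<length w. \<xi> i = w ! i)" for \<xi>
  proof
    assume h: "map \<xi> [0..<length w] = w"
    show "\<forall>i<length w. \<xi> i = w ! i"
    proof (intro allI impI)
      fix i assume "i < length w"
      then have "map \<xi> [0..<length w] ! i = \<xi> i" by simp
      then show "\<xi> i = w ! i" using h by simp
    qed
  next
    assume "\<forall>i<length w. \<xi> i = w ! i"
    then show "map \<xi> [0..<length w] = w" by (intro nth_equalityI) simp_all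
  qed
  have eq: "Zc N w = Bd N \<inter> {\<xi>. \<forall>i<length w. \<xi> i = w ! i}"
    unfolding Zc_def using e by auto
  show ?thesis unfolding BdTop_def eq by (rule openin_subtopology_Int2[OF open_prefix])
qed

definition Ucyl :: "nat \<Rightarrow> nat \<Rightarrow> (nat \<Rightarrow> letter) set set" where
  "Ucyl N m = {C \<in> CN N. \<exists>x\<in>C. \<exists>y\<in>C. map x [0..<m] \<noteq> map y [0..<m]}"

lemma CN_sub_Bd: assumes "C \<in> CN N" shows "C \<subseteq> Bd N"
proof -
  have "C \<subseteq> topspace (BdTop N)" using closedin_subset[of "BdTop N" C] assms by (simp add: CN_def)
  moreover have "topspace (BdTop N) \<subseteq> Bd N" unfolding BdTop_def topspace_subtopology by blast
  ultimately show ?thesis by blast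
qed

lemma open_Ucyl: "openin (Vietoris N) (Ucyl N m)"
proof -
  define Gen where "Gen = ({{C. C \<subseteq> U} | U. openin (BdTop N) U} \<union> {{C. C \<inter> U \<noteq> {}} | U. openin (BdTop N) U})"
  define V where "V = \<Union>{{C. C \<inter> Zc N w \<noteq> {}} \<inter> {C. C \<inter> Zc N w' \<noteq> {}} | w w'.
       length w = m \<and> length w' = m \<and> w \<noteq> w'}"
  have b: "generate_topology_on Gen {C. C \<inter> Zc N w \<noteq> {}}" for w
    by (rule generate_topology_on.Basis) (auto simp: Gen_def intro!: open_Zc)
  have "generate_topology_on Gen V"
    unfolding V_def by (rule generate_topology_on.UN) (auto intro!: generate_topology_on.Int b)
  then have oV: "openin (topology_generated_by Gen) V" by (simp add: openin_topology_generated_by_iff)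
  have "Ucyl N m = CN N \<inter> V"
  proof
    show "Ucyl N m \<subseteq> CN N \<inter> V"
    proof
      fix C assume C: "C \<in> Ucyl N m"
      then obtain x y where xy: "x \<in> C" "y \<in> C" "map x [0..<m] \<noteq> map y [0..<m]" and CC: "C \<in> CN N"
        by (auto simp: Ucyl_def)
      have "x \<in> Bd N" "y \<in> Bd N" using xy CN_sub_Bd[OF CC] by auto
      then have "x \<in> C \<inter> Zc N (map x [0..<m])" "y \<in> C \<inter> Zc N (map y [0..<m])" using xy by (auto simp: Zc_def)
      then have c1: "C \<in> {C. C \<inter> Zc N (map x [0..<m]) \<noteq> {}} \<inter> {C. C \<inter> Zc N (map y [0..<m]) \<noteq> {}}" by auto
      have mem: "{C. C \<inter> Zc N (map x [0..<m]) \<noteq> {}} \<inter> {C. C \<inter> Zc N (map y [0..<m]) \<noteq> {}} \<in>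
         {{C. C \<inter> Zc N w \<noteq> {}} \<inter> {C. C \<inter> Zc N w' \<noteq> {}} | w w'. length w = m \<and> length w' = m \<and> w \<noteq> w'}"
        by (intro CollectI exI[of _ "map x [0..<m]"] exI[of _ "map y [0..<m]"]) (use xy(3) in simp)
      have "C \<in> V" unfolding V_def using mem c1 by (rule UnionI)
      then show "C \<in> CN N \<inter> V" using CC by simp
    qed
  next
    show "CN N \<inter> V \<subseteq> Ucyl N m"
    proof
      fix C assume C: "C \<in> CN N \<inter> V"
      then obtain w w' where ww: "length w = m" "length w' = m" "w \<noteq> w'" "C \<inter> Zc N w \<noteq> {}" "C \<inter> Zc N w' \<noteq> {}"
        by (auto simp: V_def)
      then obtain x y where xy2: "x \<in> C" "y \<in> C" "map x [0..<m] = w" "map y [0..<m] = w'"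
        by (auto simp: Zc_def)
      have "map x [0..<m] \<noteq> map y [0..<m]" using ww(3) xy2 by simp
      then show "C \<in> Ucyl N m" unfolding Ucyl_def using C xy2 by blast
    qed
  qed
  then show ?thesis unfolding Vietoris_def Gen_def[symmetric]
    using openin_subtopology_Int2[OF oV] by simp
qed

lemma Ucyl_mono: "m \<le> m' \<Longrightarrow> Ucyl N m \<subseteq> Ucyl N m'"
proof
  fix C assume m: "m \<le> m'" and C: "C \<in> Ucyl N m"
  then obtain x y where xy: "x \<in> C" "y \<in> C" "map x [0..<m] \<noteq> map y [0..<m]" and CC: "C \<in> CN N"
    by (auto simp: Ucyl_def)
  have "map x [0..<m'] \<noteq> map y [0..<m']"
  proof
    assume eq: "map x [0..<m'] = map y [0..<m']"
    have t: "\<And>f. take m (map f [0..<m']) = map f [0..<m]" using m by (simp add: take_map min_def)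
    have "map x [0..<m] = map y [0..<m]" using arg_cong[OF eq, of "take m"] unfolding t .
    then show False using xy(3) by simp
  qed
  then show "C \<in> Ucyl N m'" using xy CC by (auto simp: Ucyl_def)
qed

lemma CN_Ucyl: "C \<in> CN N \<Longrightarrow> \<exists>m. C \<in> Ucyl N m"
proof -
  assume CC: "C \<in> CN N"
  then obtain x y where xy: "x \<in> C" "y \<in> C" "x \<noteq> y" by (auto simp: CN_def)
  then obtain i where "x i \<noteq> y i" by auto
  then have neq: "map x [0..<Suc i] \<noteq> map y [0..<Suc i]" by auto
  have "C \<in> Ucyl N (Suc i)" unfolding Ucyl_def using xy CC neq by blast
  then show ?thesis by blast
qed

lemma topspace_Vietoris: "topspace (Vietoris N) \<subseteq> CN N"
  by (simp add: Vietoris_def)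

lemma compact_Ucyl:
  assumes K: "compactin (Vietoris N) K"
  shows "\<exists>m. K \<subseteq> Ucyl N m"
proof -
  have KC: "K \<subseteq> CN N" using compactin_subset_topspace[OF K] topspace_Vietoris by blast
  have cov: "K \<subseteq> \<Union>(range (Ucyl N))" using KC CN_Ucyl by blast
  have opn: "\<forall>U\<in>range (Ucyl N). openin (Vietoris N) U" using open_Ucyl by auto
  have cmp: "\<forall>\<U>. (\<forall>U \<in> \<U>. openin (Vietoris N) U) \<and> K \<subseteq> \<Union>\<U>
          \<longrightarrow> (\<exists>\<F>. finite \<F> \<and> \<F> \<subseteq> \<U> \<and> K \<subseteq> \<Union>\<F>)"
    using K unfolding compactin_def by blast
  obtain F where F: "finite F" "F \<subseteq> range (Ucyl N)" "K \<subseteq> \<Union>F"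
    using cmp[rule_format, OF conjI[OF opn cov]] by blast
  obtain M where M: "M \<subseteq> UNIV" "finite M" "F = Ucyl N ` M"
    using finite_subset_image[OF F(1,2)] by blast
  have sub: "Ucyl N k \<subseteq> Ucyl N (Max (insert 0 M))" if "k \<in> M" for k
    using that M(2) by (intro Ucyl_mono) simp
  have "\<Union>F \<subseteq> Ucyl N (Max (insert 0 M))"
    using M(3) sub by auto
  then show ?thesis using F by blast
qed

lemma BorelV_sub: "A \<in> BorelV N \<Longrightarrow> A \<subseteq> CN N"
proof -
  assume A: "A \<in> BorelV N"
  have "{U. openin (Vietoris N) U} \<subseteq> Pow (CN N)"
    using openin_subset[of "Vietoris N"] topspace_Vietoris by blast
  then show ?thesis using sigma_sets_into_sp A unfolding BorelV_def by blast
qed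

lemma measure_part:
  fixes c :: ennreal and CC :: "letter list set set"
  shows "measure_space (CN N) (BorelV N) (\<lambda>A. c * emeasure (count_space CC) {H1 \<in> CC. LimSet N H1 \<in> A})"
  unfolding measure_space_def
proof (intro conjI)
  have "{U. openin (Vietoris N) U} \<subseteq> Pow (CN N)"
    using openin_subset[of "Vietoris N"] topspace_Vietoris by blast
  then show "sigma_algebra (CN N) (BorelV N)" unfolding BorelV_def by (rule sigma_algebra_sigma_sets)
next
  show "positive (BorelV N) (\<lambda>A. c * emeasure (count_space CC) {H1 \<in> CC. LimSet N H1 \<in> A})"
    by (simp add: positive_def)
next
  show "countably_additive (BorelV N) (\<lambda>A. c * emeasure (count_space CC) {H1 \<in> CC. LimSet N H1 \<in> A})"
    unfolding countably_additive_def
  proof (intro allI impI)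
    fix A :: "nat \<Rightarrow> (nat \<Rightarrow> letter) set set"
    assume dj: "disjoint_family A"
    have r: "range (\<lambda>i. {H1 \<in> CC. LimSet N H1 \<in> A i}) \<subseteq> sets (count_space CC)" by auto
    have d: "disjoint_family (\<lambda>i. {H1 \<in> CC. LimSet N H1 \<in> A i})"
      using dj unfolding disjoint_family_on_def by blast
    have u: "(\<Union>i. {H1 \<in> CC. LimSet N H1 \<in> A i}) = {H1 \<in> CC. LimSet N H1 \<in> \<Union>(range A)}" by auto
    have "suminf (\<lambda>i. c * emeasure (count_space CC) {H1 \<in> CC. LimSet N H1 \<in> A i})
        = c * suminf (\<lambda>i. emeasure (count_space CC) {H1 \<in> CC. LimSet N H1 \<in> A i})"
      by (rule ennreal_suminf_cmult)
    also have "\<dots> = c * emeasure (count_space CC) (\<Union>i. {H1 \<in> CC. LimSet N H1 \<in> A i})"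
      using suminf_emeasure[OF r d] by simp
    finally show "suminf (\<lambda>i. c * emeasure (count_space CC) {H1 \<in> CC. LimSet N H1 \<in> A i}) =
         c * emeasure (count_space CC) {H1 \<in> CC. LimSet N H1 \<in> \<Union>(range A)}"
      by (simp only: u)
  qed
qed

section \<open>Invariance\<close>

lemma LimSet_Bd: "LimSet N Y \<subseteq> Bd N" by (auto simp: LimSet_def)

lemma act_inv_act: "\<xi> \<in> Bd N \<Longrightarrow> act (winv g) (act g \<xi>) = \<xi>"
  using act_cancel'[of \<xi> g] by (simp add: act_append Bd_iff)

lemma act_act_inv: "\<xi> \<in> Bd N \<Longrightarrow> act g (act (winv g) \<xi>) = \<xi>"
  using act_cancel[of \<xi> g] by (simp add: act_append Bd_iff)

lemma img_inv_act: assumes "C \<subseteq> Bd N" shows "act (winv g) ` act g ` C = C"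
proof
  show "act (winv g) ` act g ` C \<subseteq> C"
  proof
    fix z assume "z \<in> act (winv g) ` act g ` C"
    then obtain x where x: "x \<in> C" "z = act (winv g) (act g x)" by blast
    then show "z \<in> C" using act_inv_act[of x N g] assms by auto
  qed
  show "C \<subseteq> act (winv g) ` act g ` C"
  proof
    fix x assume x: "x \<in> C"
    then have "x = act (winv g) (act g x)" using act_inv_act[of x N g] assms by auto
    then show "x \<in> act (winv g) ` act g ` C" using x by blast
  qed
qed

lemma img_act_inv: assumes "C \<subseteq> Bd N" shows "act g ` act (winv g) ` C = C"
proof
  show "act g ` act (winv g) ` C \<subseteq> C"
  proof
    fix z assume "z \<in> act g ` act (winv g) ` C"
    then obtain x where x: "x \<in> C" "z = act g (act (winv g) x)" by blast
    then show "z \<in> C" using act_act_inv[of x N g] assms by auto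
  qed
  show "C \<subseteq> act g ` act (winv g) ` C"
  proof
    fix x assume x: "x \<in> C"
    then have "x = act g (act (winv g) x)" using act_act_inv[of x N g] assms by auto
    then show "x \<in> act g ` act (winv g) ` C" using x by blast
  qed
qed

lemma emeasure_count_bij:
  assumes "bij_betw f A B" "A \<subseteq> C" "B \<subseteq> D"
  shows "emeasure (count_space C) A = emeasure (count_space D) B"
proof (cases "finite A")
  case True
  then have "finite B" using bij_betw_finite assms(1) by blast
  then show ?thesis using True assms bij_betw_same_card by (simp add: emeasure_count_space)
next
  case False
  then have "infinite B" using bij_betw_finite assms(1) by blast
  then show ?thesis using False assms by (simp add: emeasure_count_space)
qed

lemma invariance:
  assumes g: "g \<in> carrier (FN N)" and Y: "Y \<subseteq> carrier (FN N)" and A: "A \<subseteq> CN N"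
  shows "emeasure (count_space (conjclass (FN N) Y)) {H1 \<in> conjclass (FN N) Y. LimSet N H1 \<in> (\<lambda>C. act g ` C) ` A}
       = emeasure (count_space (conjclass (FN N) Y)) {H1 \<in> conjclass (FN N) Y. LimSet N H1 \<in> A}"
proof -
  interpret G: group "FN N" by (rule group_FN)
  define CC where "CC = conjclass (FN N) Y"
  define S1 where "S1 = {H1 \<in> CC. LimSet N H1 \<in> (\<lambda>C. act g ` C) ` A}"
  define S0 where "S0 = {H1 \<in> CC. LimSet N H1 \<in> A}"
  define \<psi> where "\<psi> = conjg (FN N) (winv g)"
  define \<psi>' where "\<psi>' = conjg (FN N) g"
  have wg: "winv g \<in> carrier (FN N)" using winv_carrier[OF g] .
  have ig: "inv\<^bsub>FN N\<^esub> g = winv g" using inv_FN[OF g] .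
  have CCc: "H1 \<in> CC \<Longrightarrow> \<exists>k\<in>carrier (FN N). H1 = conjg (FN N) k Y" for H1
    by (auto simp: CC_def conjclass_def)
  have CCsub: "H1 \<in> CC \<Longrightarrow> H1 \<subseteq> carrier (FN N)" for H1
  proof -
    assume "H1 \<in> CC"
    then obtain k where k: "k \<in> carrier (FN N)" "H1 = conjg (FN N) k Y" using CCc by blast
    show ?thesis using G.conjg_subset[OF k(1) Y] k(2) by simp
  qed
  have psiCC: "H1 \<in> CC \<Longrightarrow> \<psi> H1 \<in> CC" for H1
  proof -
    assume "H1 \<in> CC"
    then obtain k where k: "k \<in> carrier (FN N)" "H1 = conjg (FN N) k Y" using CCc by blast
    have "\<psi> H1 = conjg (FN N) (winv g \<otimes>\<^bsub>FN N\<^esub> k) Y"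
      unfolding \<psi>_def k(2) using G.conjg_mult[OF wg k(1) Y] by simp
    moreover have "winv g \<otimes>\<^bsub>FN N\<^esub> k \<in> carrier (FN N)" using wg k(1) by simp
    ultimately show "\<psi> H1 \<in> CC" unfolding CC_def conjclass_def by blast
  qed
  have psi'CC: "H1 \<in> CC \<Longrightarrow> \<psi>' H1 \<in> CC" for H1
  proof -
    assume "H1 \<in> CC"
    then obtain k where k: "k \<in> carrier (FN N)" "H1 = conjg (FN N) k Y" using CCc by blast
    have "\<psi>' H1 = conjg (FN N) (g \<otimes>\<^bsub>FN N\<^esub> k) Y"
      unfolding \<psi>'_def k(2) using G.conjg_mult[OF g k(1) Y] by simp
    moreover have "g \<otimes>\<^bsub>FN N\<^esub> k \<in> carrier (FN N)" using g k(1) by simp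
    ultimately show "\<psi>' H1 \<in> CC" unfolding CC_def conjclass_def by blast
  qed
  have inv1: "H1 \<in> CC \<Longrightarrow> \<psi>' (\<psi> H1) = H1" for H1
    using G.conjg_inv_cancel[OF wg CCsub[of H1]] inv_FN[OF wg] by (simp add: \<psi>_def \<psi>'_def)
  have inv2: "H1 \<in> CC \<Longrightarrow> \<psi> (\<psi>' H1) = H1" for H1
    using G.conjg_inv_cancel[OF g CCsub[of H1]] ig by (simp add: \<psi>_def \<psi>'_def)
  have Lpsi: "H1 \<in> CC \<Longrightarrow> LimSet N (\<psi> H1) = act (winv g) ` LimSet N H1" for H1
    unfolding \<psi>_def using LimSet_conjg[OF wg CCsub] by blast
  have Lpsi': "H1 \<in> CC \<Longrightarrow> LimSet N (\<psi>' H1) = act g ` LimSet N H1" for H1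
    unfolding \<psi>'_def using LimSet_conjg[OF g CCsub] by blast
  have key: "LimSet N H1 \<in> (\<lambda>C. act g ` C) ` A \<longleftrightarrow> act (winv g) ` LimSet N H1 \<in> A" for H1
  proof
    assume "LimSet N H1 \<in> (\<lambda>C. act g ` C) ` A"
    then obtain C where C: "C \<in> A" "LimSet N H1 = act g ` C" by blast
    have "C \<subseteq> Bd N" using C(1) A CN_sub_Bd by blast
    then have "act (winv g) ` LimSet N H1 = C" using C(2) img_inv_act by simp
    then show "act (winv g) ` LimSet N H1 \<in> A" using C(1) by simp
  next
    assume h: "act (winv g) ` LimSet N H1 \<in> A"
    have e: "LimSet N H1 = act g ` (act (winv g) ` LimSet N H1)"
      using img_act_inv[OF LimSet_Bd[of N H1]] by simp
    show "LimSet N H1 \<in> (\<lambda>C. act g ` C) ` A" by (subst e) (rule imageI[OF h])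
  qed
  have key': "LimSet N H1 \<in> A \<Longrightarrow> act g ` LimSet N H1 \<in> (\<lambda>C. act g ` C) ` A" for H1 by blast
  have "bij_betw \<psi> S1 S0"
  proof (rule bij_betw_byWitness[where f'=\<psi>'])
    show "\<forall>a\<in>S1. \<psi>' (\<psi> a) = a" using inv1 by (simp add: S1_def)
    show "\<forall>a\<in>S0. \<psi> (\<psi>' a) = a" using inv2 by (simp add: S0_def)
    show "\<psi> ` S1 \<subseteq> S0"
    proof
      fix z assume "z \<in> \<psi> ` S1"
      then obtain x where x: "x \<in> CC" "LimSet N x \<in> (\<lambda>C. act g ` C) ` A" "z = \<psi> x"
        by (auto simp: S1_def)
      have "LimSet N (\<psi> x) \<in> A" using Lpsi[OF x(1)] key[of x] x(2) by simp
      then show "z \<in> S0" using psiCC[OF x(1)] x(3) by (simp add: S0_def)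
    qed
    show "\<psi>' ` S0 \<subseteq> S1"
    proof
      fix z assume "z \<in> \<psi>' ` S0"
      then obtain x where x: "x \<in> CC" "LimSet N x \<in> A" "z = \<psi>' x"
        by (auto simp: S0_def)
      have "LimSet N (\<psi>' x) \<in> (\<lambda>C. act g ` C) ` A" using Lpsi'[OF x(1)] key'[OF x(2)] by simp
      then show "z \<in> S1" using psi'CC[OF x(1)] x(3) by (simp add: S1_def)
    qed
  qed
  then have "emeasure (count_space CC) S1 = emeasure (count_space CC) S0"
    by (rule emeasure_count_bij) (auto simp: S1_def S0_def)
  then show ?thesis by (simp add: CC_def S1_def S0_def)
qed

section \<open>Local finiteness\<close>

lemma qc_lim:
  assumes Hc: "Hs \<subseteq> carrier (FN N)"
    and qcH: "\<forall>h\<in>Hs. \<forall>i. \<exists>v\<in>Hs. length (red (winv (take i h) @ v)) \<le> L"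
    and cov: "\<forall>h0\<in>H0. \<exists>t\<in>T. \<exists>h\<in>Hs. h0 = red (h @ t)"
    and Tc: "T \<subseteq> carrier (FN N)" and TM: "\<forall>t\<in>T. length t \<le> M"
    and xi: "\<xi> \<in> LimSet N H0"
  shows "\<exists>v\<in>Hs. length (red (winv (map \<xi> [0..<i]) @ v)) \<le> L + 2 * M"
proof -
  obtain hs where hs: "\<forall>n. hs n \<in> H0" "\<forall>k. eventually (\<lambda>n. agree (hs n) \<xi> k) sequentially"
    using xi unfolding LimSet_iff by blast
  have "eventually (\<lambda>n. agree (hs n) \<xi> i) sequentially" using hs(2) by blast
  then obtain n0 where "\<forall>n\<ge>n0. agree (hs n) \<xi> i" unfolding eventually_sequentially by blast
  then have ag: "agree (hs n0) \<xi> i" by blast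
  then have tk: "take i (hs n0) = map \<xi> [0..<i]" by (simp add: agree_take)
  obtain t h where th: "t \<in> T" "h \<in> Hs" "hs n0 = red (h @ t)" using cov hs(1) by blast
  have rh: "reduced h" using th(2) Hc by (auto simp: carrier_FN)
  have rt: "reduced t" using th(1) Tc by (auto simp: carrier_FN)
  have q: "\<And>i. \<exists>v\<in>Hs. length (red (winv (take i h) @ v)) \<le> L" using qcH th(2) by blast
  have "\<exists>v\<in>Hs. length (red (winv (take i (red (h @ t))) @ v)) \<le> L + 2 * M"
    using qc_coset[OF q th(2) rh rt] TM th(1) by blast
  then show ?thesis using tk th(3) by simp
qed

lemma ball_finite: "finite {w \<in> carrier (FN N). length w \<le> R}"
proof -
  have f: "finite {a :: letter. fst a < N}"
  proof -
    have "{a :: letter. fst a < N} \<subseteq> {..<N} \<times> UNIV" by auto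
    moreover have "finite ({..<N} \<times> (UNIV :: bool set))" by simp
    ultimately show ?thesis by (rule finite_subset)
  qed
  have "{w \<in> carrier (FN N). length w \<le> R} \<subseteq> {xs. set xs \<subseteq> {a. fst a < N} \<and> length xs \<le> R}"
    by (auto simp: carrier_FN)
  then show ?thesis using finite_lists_length_le[OF f] by (rule finite_subset)
qed

lemma local_fin:
  assumes H: "subgroup H (FN N)" and gen: "H = generate (FN N) S" and S: "finite S" "S \<subseteq> carrier (FN N)"
    and fin: "finite (cosets_in (FN N) H (Comm (FN N) H))"
    and K: "compactin (Vietoris N) K"
  shows "finite {H1 \<in> conjclass (FN N) (Comm (FN N) H). LimSet N H1 \<in> K}"
proof -
  interpret G: group "FN N" by (rule group_FN)
  define H0 where "H0 = Comm (FN N) H"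
  define CC where "CC = conjclass (FN N) H0"
  obtain m where Km: "K \<subseteq> Ucyl N m" using compact_Ucyl[OF K] by blast
  define L where "L = Max (insert 0 (length ` S))"
  have SL: "\<forall>s\<in>S. length s \<le> L" using S(1) by (auto simp: L_def)
  have Hc: "H \<subseteq> carrier (FN N)" using subgroup.subset[OF H] .
  have H0c: "H0 \<subseteq> carrier (FN N)" unfolding H0_def by (rule G.Comm_subset)
  have qcH: "\<forall>h\<in>H. \<forall>i. \<exists>v\<in>H. length (red (winv (take i h) @ v)) \<le> L"
    using qc_generate[OF S(2) SL] gen by blast
  define T where "T = (\<lambda>K'. SOME t. t \<in> H0 \<and> K' = H #>\<^bsub>FN N\<^esub> t) ` cosets_in (FN N) H H0"
  have finT: "finite T" unfolding T_def using fin H0_def by simp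
  have Tprop: "K' \<in> cosets_in (FN N) H H0 \<Longrightarrow>
      (SOME t. t \<in> H0 \<and> K' = H #>\<^bsub>FN N\<^esub> t) \<in> H0 \<and> K' = H #>\<^bsub>FN N\<^esub> (SOME t. t \<in> H0 \<and> K' = H #>\<^bsub>FN N\<^esub> t)" for K'
  proof -
    assume "K' \<in> cosets_in (FN N) H H0"
    then have "\<exists>t. t \<in> H0 \<and> K' = H #>\<^bsub>FN N\<^esub> t" by (auto simp: cosets_in_def)
    then show ?thesis by (rule someI_ex)
  qed
  have TH0: "T \<subseteq> H0" unfolding T_def using Tprop by blast
  have Tc: "T \<subseteq> carrier (FN N)" using TH0 H0c by blast
  have oneH: "[] \<in> H" using subgroup.one_closed[OF H] by (simp add: one_FN)
  have cov: "\<forall>h0\<in>H0. \<exists>t\<in>T. \<exists>h\<in>H. h0 = red (h @ t)"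
  proof
    fix h0 assume h0: "h0 \<in> H0"
    define t where "t = (SOME t. t \<in> H0 \<and> H #>\<^bsub>FN N\<^esub> h0 = H #>\<^bsub>FN N\<^esub> t)"
    have mem: "H #>\<^bsub>FN N\<^esub> h0 \<in> cosets_in (FN N) H H0" using h0 by (auto simp: cosets_in_def)
    then have tT: "t \<in> T" unfolding T_def t_def by blast
    have eq: "H #>\<^bsub>FN N\<^esub> h0 = H #>\<^bsub>FN N\<^esub> t" using Tprop[OF mem] unfolding t_def by blast
    have rh0: "reduced h0" using h0 H0c by (auto simp: carrier_FN)
    have "h0 = [] \<otimes>\<^bsub>FN N\<^esub> h0" by (simp add: mult_FN red_reduced[OF rh0])
    then have "h0 \<in> H #>\<^bsub>FN N\<^esub> h0" using oneH unfolding r_coset_def by blast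
    then have "h0 \<in> H #>\<^bsub>FN N\<^esub> t" using eq by simp
    then obtain h where "h \<in> H" "h0 = h \<otimes>\<^bsub>FN N\<^esub> t" unfolding r_coset_def by blast
    then show "\<exists>t\<in>T. \<exists>h\<in>H. h0 = red (h @ t)" using tT by (auto simp: mult_FN)
  qed
  define M where "M = Max (insert 0 (length ` T))"
  have TM: "\<forall>t\<in>T. length t \<le> M" using finT by (auto simp: M_def)
  define D where "D = L + 2 * M"
  have main: "{H1 \<in> CC. LimSet N H1 \<in> K} \<subseteq> (\<lambda>k. conjg (FN N) k H0) ` {w \<in> carrier (FN N). length w \<le> m + D}"
  proof
    fix H1 assume "H1 \<in> {H1 \<in> CC. LimSet N H1 \<in> K}"
    then have H1: "H1 \<in> CC" "LimSet N H1 \<in> K" by auto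
    obtain k where k: "k \<in> carrier (FN N)" "H1 = conjg (FN N) k H0"
      using H1(1) by (auto simp: CC_def conjclass_def)
    have rk: "reduced k" using k(1) by (simp add: carrier_FN)
    have LH1: "LimSet N H1 = act k ` LimSet N H0" using LimSet_conjg[OF k(1) H0c] k(2) by simp
    have "LimSet N H1 \<in> Ucyl N m" using H1(2) Km by blast
    then obtain x y where xy: "x \<in> LimSet N H1" "y \<in> LimSet N H1" "map x [0..<m] \<noteq> map y [0..<m]"
      by (auto simp: Ucyl_def)
    obtain \<xi> \<eta> where xe: "\<xi> \<in> LimSet N H0" "\<eta> \<in> LimSet N H0" "x = act k \<xi>" "y = act k \<eta>"
      using xy(1,2) LH1 by blast
    have "\<exists>i<m. x i \<noteq> y i"
    proof (rule ccontr)
      assume "\<not> (\<exists>i<m. x i \<noteq> y i)"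
      then have "map x [0..<m] = map y [0..<m]" by (intro map_cong) auto
      then show False using xy(3) by simp
    qed
    then obtain i where i: "i < m" "x i \<noteq> y i" by blast
    define d where "d = (LEAST i. x i \<noteq> y i)"
    have dx: "x d \<noteq> y d" unfolding d_def using i(2) by (rule LeastI)
    have dle: "d \<le> i" unfolding d_def using i(2) by (rule Least_le)
    have dlt: "\<forall>j<d. x j = y j" unfolding d_def using not_less_Least by blast
    have "\<xi> \<in> Bd N" "\<eta> \<in> Bd N" using xe(1,2) LimSet_Bd[of N H0] by auto
    then have RIxi: "RI \<xi>" and RIeta: "RI \<eta>" by (auto simp: Bd_iff)
    obtain q where q: "(\<exists>i. q = map \<xi> [0..<i]) \<or> (\<exists>i. q = map \<eta> [0..<i])"
      "red (k @ q) = map (act k \<xi>) [0..<d]"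
      using branch_point[OF rk RIxi RIeta, of d] dlt dx xe(3,4) by blast
    have qc: "\<exists>v\<in>H. length (red (winv q @ v)) \<le> D"
      using q(1) qc_lim[OF Hc qcH cov Tc TM xe(1)] qc_lim[OF Hc qcH cov Tc TM xe(2)]
      unfolding D_def by blast
    then obtain v where v: "v \<in> H" "length (red (winv q @ v)) \<le> D" by blast
    have vc: "v \<in> carrier (FN N)" using v(1) Hc by blast
    define k' where "k' = k \<otimes>\<^bsub>FN N\<^esub> v"
    have k'c: "k' \<in> carrier (FN N)" unfolding k'_def using k(1) vc by simp
    have "k' = red (k @ v)" by (simp add: k'_def mult_FN)
    also have "\<dots> = red (k @ q @ winv q @ v)" using red_cancel_mid[of k q v] by simp
    also have "\<dots> = red ((k @ q) @ (winv q @ v))" by simp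
    finally have k'eq: "k' = red ((k @ q) @ (winv q @ v))" .
    have "length k' \<le> length (red (k @ q)) + length (red (winv q @ v))"
      unfolding k'eq by (rule length_red_append)
    also have "\<dots> \<le> d + D" using q(2) v(2) by simp
    also have "\<dots> \<le> m + D" using dle i(1) by simp
    finally have k'len: "length k' \<le> m + D" .
    have "conjg (FN N) k' H0 = conjg (FN N) k (conjg (FN N) v H0)"
      unfolding k'_def by (rule G.conjg_mult[OF k(1) vc H0c])
    also have "conjg (FN N) v H0 = H0" unfolding H0_def by (rule G.conjg_Comm[OF H v(1)])
    finally have "conjg (FN N) k' H0 = H1" using k(2) by simp
    then show "H1 \<in> (\<lambda>k. conjg (FN N) k H0) ` {w \<in> carrier (FN N). length w \<le> m + D}"
      using k'c k'len by blast
  qed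
  have "finite ((\<lambda>k. conjg (FN N) k H0) ` {w \<in> carrier (FN N). length w \<le> m + D})"
    by (rule finite_imageI[OF ball_finite])
  then show ?thesis using main finite_subset unfolding CC_def H0_def by blast
qed


theorem lemma4p4:
  fixes N :: nat and H :: "letter list set"
  assumes "subgroup H (FN N)"
    and "H \<noteq> {\<one>\<^bsub>FN N\<^esub>}"
    and "\<exists>S. finite S \<and> S \<subseteq> carrier (FN N) \<and> H = generate (FN N) S"
  shows "SCurr N (eta N H)"
proof -
  interpret G: group "FN N" by (rule group_FN)
  obtain S where S: "finite S" "S \<subseteq> carrier (FN N)" "H = generate (FN N) S" using assms(3) by blast
  define H0 where "H0 = Comm (FN N) H"
  define CC where "CC = conjclass (FN N) H0"
  define c where "c = card (cosets_in (FN N) H H0)"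
  have H0c: "H0 \<subseteq> carrier (FN N)" unfolding H0_def by (rule G.Comm_subset)
  have eta_eq: "eta N H = (\<lambda>A. of_nat c * emeasure (count_space CC) {H1 \<in> CC. LimSet N H1 \<in> A})"
    by (rule ext) (simp only: eta_def Let_def H0_def CC_def c_def)
  show ?thesis unfolding SCurr_def eta_eq
  proof (intro conjI ballI allI impI)
    show "measure_space (CN N) (BorelV N) (\<lambda>A. of_nat c * emeasure (count_space CC) {H1 \<in> CC. LimSet N H1 \<in> A})"
      by (rule measure_part)
  next
    fix g A assume g: "g \<in> carrier (FN N)" and A: "A \<in> BorelV N"
    show "of_nat c * emeasure (count_space CC) {H1 \<in> CC. LimSet N H1 \<in> (\<lambda>C. act g ` C) ` A} =
          of_nat c * emeasure (count_space CC) {H1 \<in> CC. LimSet N H1 \<in> A}"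
      unfolding CC_def by (simp only: invariance[OF g H0c BorelV_sub[OF A]])
  next
    fix K assume K: "compactin (Vietoris N) K"
    show "of_nat c * emeasure (count_space CC) {H1 \<in> CC. LimSet N H1 \<in> K} < \<infinity>"
    proof (cases "c = 0")
      case True
      then show ?thesis unfolding infinity_ennreal_def by simp
    next
      case False
      then have fin: "finite (cosets_in (FN N) H (Comm (FN N) H))"
      proof -
        have "card (cosets_in (FN N) H (Comm (FN N) H)) \<noteq> 0" using False unfolding c_def H0_def .
        then have "0 < card (cosets_in (FN N) H (Comm (FN N) H))" by (simp only: neq0_conv)
        then show ?thesis by (rule card_ge_0_finite)
      qed
      have f: "finite {H1 \<in> CC. LimSet N H1 \<in> K}"
        unfolding CC_def H0_def by (rule local_fin[OF assms(1) S(3) S(1) S(2) fin K])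
      have sub: "{H1 \<in> CC. LimSet N H1 \<in> K} \<subseteq> CC" by blast
      have e: "emeasure (count_space CC) {H1 \<in> CC. LimSet N H1 \<in> K} = of_nat (card {H1 \<in> CC. LimSet N H1 \<in> K})"
        by (rule emeasure_count_space_finite[OF sub f])
      have "(of_nat c :: ennreal) * of_nat (card {H1 \<in> CC. LimSet N H1 \<in> K}) = of_nat (c * card {H1 \<in> CC. LimSet N H1 \<in> K})"
        by (simp only: of_nat_mult)
      then show ?thesis unfolding e infinity_ennreal_def using of_nat_less_top by (simp only:)
    qed
  qed
qed

end
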